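(* An infinite $\frac{7}{3}$-power-free binary word is a fixed point of a non-identity morphism $h:\{0,1\}^*\to\{0,1\}^*$ if and only if it is equal to the Thue–Morse word $\mu^\omega(0)$ or its complement $\mu^\omega(1)$.
   Context: $\mu$ is the Thue–Morse morphism, $\mu(0)=01$, $\mu(1)=10$, and $\mu^\omega(a)$ is the infinite word $\lim_{n\to\infty}\mu^n(a)$ for $a\in\{0,1\}$. The identity morphism maps $0\mapsto 0$, $1\mapsto 1$. An infinite word $\mathbf{w}$ is a fixed point of $h$ if $h(\mathbf{w})=\mathbf{w}$ (with $h$ applied letterwise). For a rational $\alpha\ge 1$, an $\alpha$-power is a word of the form $x^nx'$ with $x$ a nonempty word, $x'$ a prefix of $x$, $n$ a nonnegative integer and $n+|x'|/|x|=\alpha$. A word is $\alpha$-power-free if none of its finite subwords is a $\beta$-power for any rational $\beta\geq\alpha$. *)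

theory Defs
  imports Complex_Main "HOL-Library.Sublist"
begin

(* Binary alphabet {0,1} encoded as bool: 0 = False, 1 = True.
   Finite words: bool list.  Infinite words: nat => bool. *)

type_synonym morphism = "bool \<Rightarrow> bool list"

definition morph_apply :: "morphism \<Rightarrow> bool list \<Rightarrow> bool list" where
  "morph_apply h u = concat (map h u)"

definition id_morph :: morphism where
  "id_morph = (\<lambda>a. [a])"

definition mu :: morphism where
  "mu a = [a, \<not> a]"

(* mu^omega(a): the limit of mu^n(a); mu^(Suc i)(a) has length 2^(i+1) > i,
   and each mu^n(a) is a prefix of mu^(n+1)(a), so position i is read off there. *)
definition thue_morse :: "bool \<Rightarrow> (nat \<Rightarrow> bool)" where
  "thue_morse a i = ((morph_apply mu ^^ Suc i) [a]) ! i"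

definition pref :: "(nat \<Rightarrow> bool) \<Rightarrow> nat \<Rightarrow> bool list" where
  "pref w n = map w [0..<n]"

(* h(w) = w for infinite w: the images of the prefixes of w are prefixes of w,
   and their lengths are unbounded (so h(w) is indeed infinite). *)
definition fixed_point :: "morphism \<Rightarrow> (nat \<Rightarrow> bool) \<Rightarrow> bool" where
  "fixed_point h w \<longleftrightarrow>
     (\<forall>n. prefix (morph_apply h (pref w n)) (pref w (length (morph_apply h (pref w n))))) \<and>
     (\<forall>N. \<exists>n. N \<le> length (morph_apply h (pref w n)))"

definition is_power :: "bool list \<Rightarrow> rat \<Rightarrow> bool" where
  "is_power u \<beta> \<longleftrightarrow> (\<exists>x x' n. x \<noteq> [] \<and> prefix x' x \<and>
      u = concat (replicate n x) @ x' \<and> of_nat n + of_nat (length x') / of_nat (length x) = \<beta>)"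

definition subword_of :: "bool list \<Rightarrow> (nat \<Rightarrow> bool) \<Rightarrow> bool" where
  "subword_of u w \<longleftrightarrow> (\<exists>i. u = map w [i..<i + length u])"

definition power_free :: "rat \<Rightarrow> (nat \<Rightarrow> bool) \<Rightarrow> bool" where
  "power_free \<alpha> w \<longleftrightarrow> (\<forall>u \<beta>. subword_of u w \<and> \<alpha> \<le> \<beta> \<longrightarrow> \<not> is_power u \<beta>)"

end

theory Submission
  imports Defs
begin


definition dbl :: "(nat \<Rightarrow> bool) \<Rightarrow> nat \<Rightarrow> bool" where
  "dbl y i \<longleftrightarrow> y i = y (Suc i)"

lemma nth_concat_replicate:
  assumes "t < n * length x"
  shows "concat (replicate n x) ! t = x ! (t mod length x)"
  using assms
proof (induction n arbitrary: t)
  case 0 then show ?case by simp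
next
  case (Suc n)
  show ?case
  proof (cases "t < length x")
    case True then show ?thesis by (simp add: nth_append)
  next
    case False
    then have "t - length x < n * length x" using Suc.prems by auto
    then have "concat (replicate n x) ! (t - length x) = x ! ((t - length x) mod length x)"
      using Suc.IH by blast
    moreover have "(t - length x) mod length x = t mod length x"
      using False by (simp add: le_mod_geq)
    ultimately show ?thesis using False by (simp add: nth_append)
  qed
qed

lemma periodic_mod:
  fixes y :: "nat \<Rightarrow> bool" and t N p i :: nat
  assumes "\<forall>t. t + p < N \<longrightarrow> y (i+t) = y (i+t+p)" "0 < p"
  shows "t < N \<Longrightarrow> y (i+t) = y (i + t mod p)"
proof (induction t rule: less_induct)
  case (less t)
  show ?case
  proof (cases "t < p")
    case True then show ?thesis by simp
  next
    case False
    then have "y (i + (t-p)) = y (i + (t - p) mod p)" using less.IH[of "t-p"] less.prems assms(2) by auto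
    moreover have "y (i + (t-p)) = y (i + (t-p) + p)"
    proof -
      have "(t - p) + p < N" using less.prems False by simp
      then show ?thesis using assms(1) by blast
    qed
    moreover have "i + (t-p) + p = i + t" using False by simp
    moreover have "(t - p) mod p = t mod p" using False by (simp add: le_mod_geq)
    ultimately show ?thesis using False by simp
  qed
qed

lemma forbid:
  assumes pf: "power_free (7/3) y" and p: "0 < p" and N: "7*p \<le> 3*N"
    and per: "\<forall>t. t + p < N \<longrightarrow> y (i+t) = y (i+t+p)"
  shows False
proof -
  have pN: "p \<le> N" using p N by linarith
  define u where "u = map y [i..<i+N]"
  define x where "x = map y [i..<i+p]"
  define x' where "x' = map y [i..<i + N mod p]"
  define n where "n = N div p"
  have lx: "length x = p" unfolding x_def by simp
  have lx': "length x' = N mod p" unfolding x'_def by simp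
  have xne: "x \<noteq> []" using p lx by auto
  have pre: "prefix x' x"
  proof -
    have "N mod p \<le> p" using p by (simp add: order_less_imp_le)
    then have "[i..<i+p] = [i..<i + N mod p] @ [i + N mod p..<i+p]"
      using upt_add_eq_append[of i "i + N mod p" "p - N mod p"] by simp
    then show ?thesis unfolding x_def x'_def by (simp add: prefixI)
  qed
  have lc: "length (concat (replicate n x)) = n * p"
    using lx by (induction n) auto
  have np: "n * p + N mod p = N" unfolding n_def by (metis div_mult_mod_eq)
  have ueq: "u = concat (replicate n x) @ x'"
  proof (rule nth_equalityI)
    show "length u = length (concat (replicate n x) @ x')"
      unfolding u_def using lc lx' np by simp
  next
    fix t assume "t < length u"
    then have tN: "t < N" unfolding u_def by simp
    have yt: "u ! t = y (i + t mod p)" unfolding u_def using periodic_mod[OF per p tN] tN by simp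
    show "u ! t = (concat (replicate n x) @ x') ! t"
    proof (cases "t < n * p")
      case True
      then have "(concat (replicate n x) @ x') ! t = concat (replicate n x) ! t"
        using lc by (simp add: nth_append)
      also have "\<dots> = x ! (t mod p)" using nth_concat_replicate[of t n x] lx True by simp
      also have "\<dots> = y (i + t mod p)" unfolding x_def using p by simp
      finally show ?thesis using yt by simp
    next
      case False
      have "(concat (replicate n x) @ x') ! t = x' ! (t - n*p)"
        using False lc by (simp add: nth_append)
      also have "\<dots> = y (i + (t - n*p))" unfolding x'_def using False tN np by simp
      also have "t - n*p = t mod p"
      proof -
        have "t - n*p < p" using False tN np mod_less_divisor[OF p, of N] by linarith
        then have "(t - n*p) mod p = t - n*p" by simp
        moreover have "(t - n*p) mod p = t mod p" using False
          by (metis le_add_diff_inverse mod_mult_self3 not_le)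
        ultimately show ?thesis by simp
      qed
      finally show ?thesis using yt by simp
    qed
  qed
  have sw: "subword_of u y" unfolding subword_of_def u_def by auto
  have beta: "(7/3::rat) \<le> of_nat n + of_nat (length x') / of_nat (length x)"
  proof -
    have "of_nat n + of_nat (length x') / of_nat (length x) = (of_nat N :: rat) / of_nat p"
    proof -
      have "N = n * p + N mod p" unfolding n_def by simp
      then have "(of_nat N::rat) = of_nat n * of_nat p + of_nat (N mod p)" by (metis of_nat_add of_nat_mult)
      then show ?thesis using lx lx' p by (simp add: field_simps)
    qed
    moreover have "(7/3::rat) \<le> of_nat N / of_nat p"
    proof -
      have "(7::rat) * of_nat p \<le> 3 * of_nat N" using N by (metis of_nat_le_iff of_nat_mult of_nat_numeral)
      then show ?thesis using p by (simp add: field_simps)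
    qed
    ultimately show ?thesis by simp
  qed
  have "is_power u (of_nat n + of_nat (length x') / of_nat (length x))"
    unfolding is_power_def using xne pre ueq by blast
  then show False using pf sw beta unfolding power_free_def by blast
qed

lemma F1: "power_free (7/3) y \<Longrightarrow> y j = y (j+1) \<Longrightarrow> y (j+1) = y (j+2) \<Longrightarrow> False"
  by (rule forbid[of y 1 3 j]) (auto simp: less_Suc_eq numeral_3_eq_3)

lemma F2: "power_free (7/3) y \<Longrightarrow> y j \<noteq> y (j+1) \<Longrightarrow> y (j+1) \<noteq> y (j+2) \<Longrightarrow> y (j+2) \<noteq> y (j+3)
   \<Longrightarrow> y (j+3) \<noteq> y (j+4) \<Longrightarrow> False"
proof (rule forbid[of y 2 5 j])
  assume h: "y j \<noteq> y (j+1)" "y (j+1) \<noteq> y (j+2)" "y (j+2) \<noteq> y (j+3)" "y (j+3) \<noteq> y (j+4)"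
  show "\<forall>t. t + 2 < 5 \<longrightarrow> y (j+t) = y (j+t+2)"
  proof (intro allI impI)
    fix t :: nat assume "t + 2 < 5"
    then have "t = 0 \<or> t = 1 \<or> t = 2" by arith
    moreover have "y (j+0) = y (j+0+2)" using h by (simp only: add_0_right) argo
    moreover have "y (j+1) = y (j+1+2)" using h by (simp only: add.assoc numeral_plus_one one_plus_numeral semiring_norm) argo
    moreover have "y (j+2) = y (j+2+2)" using h by (simp only: add.assoc numeral_plus_numeral semiring_norm) argo
    ultimately show "y (j+t) = y (j+t+2)" by blast
  qed
qed auto

lemma F3: "power_free (7/3) y \<Longrightarrow> y j = y (j+3) \<Longrightarrow> y (j+1) = y (j+4) \<Longrightarrow> y (j+2) = y (j+5)
   \<Longrightarrow> y (j+3) = y (j+6) \<Longrightarrow> False"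
proof (rule forbid[of y 3 7 j])
  assume h: "y j = y (j+3)" "y (j+1) = y (j+4)" "y (j+2) = y (j+5)" "y (j+3) = y (j+6)"
  show "\<forall>t. t + 3 < 7 \<longrightarrow> y (j+t) = y (j+t+3)"
  proof (intro allI impI)
    fix t :: nat assume "t + 3 < 7"
    then have "t = 0 \<or> t = 1 \<or> t = 2 \<or> t = 3" by arith
    moreover have "y (j+0) = y (j+0+3)" using h by simp
    moreover have "y (j+1) = y (j+1+3)" using h by (simp only: add.assoc numeral_plus_one one_plus_numeral semiring_norm)
    moreover have "y (j+2) = y (j+2+3)" using h by (simp only: add.assoc numeral_plus_numeral semiring_norm)
    moreover have "y (j+3) = y (j+3+3)" using h by (simp only: add.assoc numeral_plus_numeral semiring_norm)
    ultimately show "y (j+t) = y (j+t+3)" by blast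
  qed
qed auto




lemmas nrm = add.assoc numeral_plus_one one_plus_numeral numeral_plus_numeral semiring_norm one_add_one

lemma LOC0:
  assumes pf: "power_free (7/3) y" and d: "y (j+1) = y (j+2)"
  shows "y (j+2) \<noteq> y (j+3) \<and> ((y(j+3) = y(j+4) \<and> y(j+3) \<noteq> y(j+1)) \<or>
     (y(j+3) \<noteq> y(j+4) \<and> y(j+4) \<noteq> y(j+5) \<and> y(j+5) = y(j+6) \<and> y(j+5) \<noteq> y(j+1)))"
proof -
  have a: "\<not> (y j = y (j+1) \<and> y (j+1) = y (j+2))" using F1[OF pf, of j] by blast
  have b: "\<not> (y (j+1) = y (j+2) \<and> y (j+2) = y (j+3))" using F1[OF pf, of "j+1"] by (simp only: nrm) blast
  have c: "\<not> (y (j+4) = y (j+5) \<and> y (j+5) = y (j+6))" using F1[OF pf, of "j+4"] by (simp only: nrm) blast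
  have e: "\<not> (y (j+2) \<noteq> y (j+3) \<and> y (j+3) \<noteq> y (j+4) \<and> y (j+4) \<noteq> y (j+5) \<and> y (j+5) \<noteq> y (j+6))"
    using F2[OF pf, of "j+2"] by (simp only: nrm) blast
  have f: "\<not> (y j = y (j+3) \<and> y (j+1) = y (j+4) \<and> y (j+2) = y (j+5) \<and> y (j+3) = y (j+6))"
    using F3[OF pf, of j] by blast
  show ?thesis using a b c e f d by argo
qed

lemma LOC:
  assumes pf: "power_free (7/3) y" and i: "1 \<le> i" and d: "dbl y i"
  shows "\<not> dbl y (i+1) \<and> ((dbl y (i+2) \<and> y (i+2) \<noteq> y i) \<or>
     (\<not> dbl y (i+2) \<and> \<not> dbl y (i+3) \<and> dbl y (i+4) \<and> y (i+4) \<noteq> y i))"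
proof -
  obtain j where j: "i = j + 1" using i by (metis le_add_diff_inverse2)
  have "y (j+1) = y (j+2)" using d j by (simp add: dbl_def)
  note L = LOC0[OF pf this]
  have e: "dbl y i = (y (j+1) = y (j+2))" "dbl y (i+1) = (y (j+2) = y (j+3))"
    "dbl y (i+2) = (y (j+3) = y (j+4))" "dbl y (i+3) = (y (j+4) = y (j+5))"
    "dbl y (i+4) = (y (j+5) = y (j+6))" "y i = y (j+1)" "y (i+2) = y (j+3)" "y (i+4) = y (j+5)"
    by (simp_all add: dbl_def j eval_nat_numeral)
  show ?thesis unfolding e using L by argo
qed

lemma PL_aux:
  assumes pf: "power_free (7/3) y"
  shows "1 \<le> i \<Longrightarrow> dbl y i \<Longrightarrow> dbl y (i + m) \<Longrightarrow> even m"
proof (induction m arbitrary: i rule: less_induct)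
  case (less m)
  show ?case
  proof (cases "m = 0")
    case True then show ?thesis by simp
  next
    case False
    note L = LOC[OF pf less.prems(1,2)]
    have m1: "m \<noteq> 1" using L less.prems(3) by auto
    show ?thesis
    proof (cases "dbl y (i+2)")
      case True
      then have "m \<noteq> 1" using m1 by simp
      then have "m \<ge> 2" using False by arith
      have eq: "i + 2 + (m - 2) = i + m" using \<open>m \<ge> 2\<close> by simp
      have lt: "m - 2 < m" using False by simp
      have "dbl y (i + 2 + (m - 2))" unfolding eq by (rule less.prems(3))
      then have "even (m - 2)" using less.IH[OF lt, of "i+2"] True by simp

      then show ?thesis using \<open>m \<ge> 2\<close> by simp
    next
      case nd: False
      then have L2: "\<not> dbl y (i+3)" "dbl y (i+4)" using L by auto
      have "m \<noteq> 2" "m \<noteq> 3" using nd L2 less.prems(3) by auto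
      then have "m \<ge> 4" using m1 False by arith
      have eq: "i + 4 + (m - 4) = i + m" using \<open>m \<ge> 4\<close> by simp
      have lt: "m - 4 < m" using False by simp
      have "dbl y (i + 4 + (m - 4))" unfolding eq by (rule less.prems(3))
      then have "even (m - 4)" using less.IH[OF lt, of "i+4"] L2 by simp

      then show ?thesis using \<open>m \<ge> 4\<close> by simp
    qed
  qed
qed

lemma PL:
  assumes pf: "power_free (7/3) y" and "1 \<le> i" "1 \<le> j" "dbl y i" "dbl y j"
  shows "even i = even j"
proof (cases "i \<le> j")
  case True
  then obtain m where "j = i + m" by (metis le_add_diff_inverse)
  then show ?thesis using PL_aux[OF pf, of i m] assms by auto
next
  case False
  then obtain m where "i = j + m" by (metis le_add_diff_inverse nat_le_linear)
  then show ?thesis using PL_aux[OF pf, of j m] assms by auto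
qed

lemma dbl_exists:
  assumes pf: "power_free (7/3) y"
  shows "\<exists>d. i \<le> d \<and> d \<le> i + 3 \<and> dbl y d"
proof -
  have "\<not> (y i \<noteq> y (i+1) \<and> y (i+1) \<noteq> y (i+2) \<and> y (i+2) \<noteq> y (i+3) \<and> y (i+3) \<noteq> y (i+4))"
    using F2[OF pf, of i] by blast
  then show ?thesis unfolding dbl_def
    by (metis Suc_eq_plus1 add_Suc_right le_add1 nat_add_left_cancel_le numeral_1_eq_Suc_0 numeral_2_eq_2 numeral_3_eq_3 numeral_Bit0 order_refl add_2_eq_Suc' add_numeral_left semiring_norm(2) semiring_norm(8) one_add_one)
qed


definition Wok :: "(nat \<Rightarrow> bool) \<Rightarrow> bool" where
  "Wok w \<longleftrightarrow> (\<forall>x. \<exists>k\<ge>1. w k = x \<and> w (k+1) = x) \<and> (\<forall>x. \<exists>k\<ge>1. w k = x \<and> w (k+1) = (\<not> x))"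

lemma Wok:
  assumes pf: "power_free (7/3) y"
  shows "Wok y"
proof -
  obtain d where d: "1 \<le> d" "dbl y d" using dbl_exists[OF pf, of 1] by auto
  note L = LOC[OF pf d]
  obtain d' where d': "d' \<ge> 1" "dbl y d'" "y d' \<noteq> y d" using L d(1)
    by (metis le_add1 order_trans)
  have t1: "y (d+1) = y d" "y (d+2) \<noteq> y (d+1)" using d L unfolding dbl_def by (auto simp: eval_nat_numeral)
  have "\<not> dbl y (d'+1)" using LOC[OF pf d'(1,2)] by blast
  then have t2: "y (d'+1) = y d'" "y (d'+2) \<noteq> y (d'+1)" using d' unfolding dbl_def by (auto simp: eval_nat_numeral)
  have A: "\<forall>x. \<exists>k\<ge>1. y k = x \<and> y (k+1) = x"
  proof
    fix x show "\<exists>k\<ge>1. y k = x \<and> y (k+1) = x"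
    proof (cases "y d = x")
      case True then show ?thesis using d unfolding dbl_def by auto
    next
      case False then have "y d' = x" using d' by auto
      then show ?thesis using d' unfolding dbl_def by auto
    qed
  qed
  have B: "\<forall>x. \<exists>k\<ge>1. y k = x \<and> y (k+1) = (\<not> x)"
  proof
    fix x show "\<exists>k\<ge>1. y k = x \<and> y (k+1) = (\<not> x)"
    proof (cases "y d = x")
      case True then show ?thesis using t1 d(1) by (intro exI[of _ "d+1"]) (auto simp: eval_nat_numeral)
    next
      case False then have "y d' = x" using d' by auto
      then show ?thesis using t2 d'(1) by (intro exI[of _ "d'+1"]) (auto simp: eval_nat_numeral)
    qed
  qed
  show ?thesis unfolding Wok_def using A B by blast
qed

lemma gap4_exists:
  assumes pf: "power_free (7/3) y"
  shows "\<exists>d\<ge>1. dbl y d \<and> \<not> dbl y (d+2)"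
proof (rule ccontr)
  assume C: "\<not> ?thesis"
  obtain d where d: "1 \<le> d" "dbl y d" using dbl_exists[OF pf, of 1] by auto
  have D: "dbl y (d + 2*k)" for k
  proof (induction k)
    case 0 then show ?case using d by simp
  next
    case (Suc k) then have "dbl y (d + 2*k + 2)" using C d(1) by auto
    then show ?case by (simp add: add.assoc)
  qed
  have N: "y (d + 2*k + 2) \<noteq> y (d + 2*k)" for k
    using LOC[OF pf _ D[of k]] d(1) D[of "Suc k"] by (auto simp: add.assoc)
  have P: "y (d + 2*k) = y (d + 2*k + 4) \<and> y (d + 2*k + 1) = y (d + 2*k + 5)" for k
  proof -
    have "y (d + 2*(k+1)) \<noteq> y (d + 2*k)" "y (d + 2*(k+1)+2) \<noteq> y (d + 2*(k+1))"
      using N[of k] N[of "k+1"] by (simp_all add: algebra_simps)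
    moreover have "dbl y (d + 2*k)" "dbl y (d + 2*(k+2))" using D by blast+
    ultimately show ?thesis unfolding dbl_def by (simp add: algebra_simps eval_nat_numeral)
  qed
  have "\<forall>t. t + 4 < 10 \<longrightarrow> y (d+t) = y (d+t+4)"
  proof (intro allI impI)
    fix t :: nat assume "t + 4 < 10"
    have "t = 2*(t div 2) \<or> t = 2*(t div 2) + 1" by arith
    then show "y (d+t) = y (d+t+4)" using P[of "t div 2"]
      by (elim disjE) (metis add.assoc add.commute, metis add.assoc add.commute numeral_plus_one semiring_norm(5) semiring_norm(2) numeral_Bit0 numeral_Bit1)
  qed
  then show False using forbid[OF pf, of 4 10 d] by simp
qed

lemma xzx_exists:
  assumes pf: "power_free (7/3) y"
  shows "\<exists>k\<ge>1. y k = x \<and> y (k+1) = (\<not> x) \<and> y (k+2) = x"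
proof -
  obtain d where d: "d \<ge> 1" "dbl y d" "\<not> dbl y (d+2)" using gap4_exists[OF pf] by blast
  note L = LOC[OF pf d(1,2)]
  then have "\<not> dbl y (d+1)" "\<not> dbl y (d+3)" "dbl y (d+4)" using d by auto
  then have h: "y (d+1) \<noteq> y (d+2)" "y (d+2) \<noteq> y (d+3)" "y (d+3) \<noteq> y (d+4)"
    using d(3) unfolding dbl_def by (simp_all add: eval_nat_numeral)
  show ?thesis
  proof (cases "y (d+1) = x")
    case True
    then show ?thesis using h d(1)
      by (intro exI[of _ "d+1"]) (auto simp: eval_nat_numeral)
  next
    case False
    then have "y (d+2) = x" using h by auto
    then show ?thesis using h d(1)
      by (intro exI[of _ "d+2"]) (auto simp: eval_nat_numeral)
  qed
qed




lemma ma_Nil[simp]: "morph_apply h [] = []" by (simp add: morph_apply_def)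
lemma ma_Cons[simp]: "morph_apply h (a # u) = h a @ morph_apply h u" by (simp add: morph_apply_def)
lemma ma_append[simp]: "morph_apply h (u @ v) = morph_apply h u @ morph_apply h v" by (simp add: morph_apply_def)
lemma ma_concat_replicate: "morph_apply h (concat (replicate n x)) = concat (replicate n (morph_apply h x))"
  by (induction n) auto
lemma ma_prefix: "prefix u v \<Longrightarrow> prefix (morph_apply h u) (morph_apply h v)"
  by (metis ma_append prefix_def)
lemma len_mu[simp]: "length (morph_apply mu u) = 2 * length u"
  by (induction u) (auto simp: mu_def)
lemma mu_nth: "j < length u \<Longrightarrow> morph_apply mu u ! (2*j) = u ! j \<and> morph_apply mu u ! (2*j+1) = (\<not> u ! j)"
proof (induction u arbitrary: j)
  case Nil then show ?case by simp
next
  case (Cons a u)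
  show ?case
  proof (cases j)
    case 0 then show ?thesis by (simp add: mu_def)
  next
    case (Suc j') then show ?thesis using Cons by (simp add: mu_def)
  qed
qed

lemma pref_Suc: "pref w (Suc n) = pref w n @ [w n]" by (simp add: pref_def)
lemma pref_len[simp]: "length (pref w n) = n" by (simp add: pref_def)
lemma pref_nth[simp]: "j < n \<Longrightarrow> pref w n ! j = w j" by (simp add: pref_def)

definition Phi :: "morphism \<Rightarrow> (nat \<Rightarrow> bool) \<Rightarrow> nat \<Rightarrow> nat" where
  "Phi G w k = length (morph_apply G (pref w k))"

lemma Phi_0[simp]: "Phi G w 0 = 0" by (simp add: Phi_def pref_def)
lemma Phi_Suc: "Phi G w (Suc k) = Phi G w k + length (G (w k))"
  by (simp add: Phi_def pref_Suc)

definition place :: "morphism \<Rightarrow> (nat \<Rightarrow> bool) \<Rightarrow> (nat \<Rightarrow> bool) \<Rightarrow> bool" where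
  "place G w y \<longleftrightarrow> (\<forall>k j. j < length (G (w k)) \<longrightarrow> y (Phi G w k + j) = G (w k) ! j)"

lemma pf_half:
  assumes pf: "power_free (7/3) y" and alt: "\<forall>i. y (2*i+q) \<noteq> y (2*i+q+1)"
  shows "power_free (7/3) (\<lambda>j. y (2*j+q))"
  unfolding power_free_def
proof (intro allI impI notI)
  let ?y = "\<lambda>j. y (2*j+q)"
  fix u \<beta> assume A: "subword_of u ?y \<and> 7/3 \<le> \<beta>" and P: "is_power u \<beta>"
  obtain i where ui: "u = map ?y [i..<i + length u]" using A unfolding subword_of_def by blast
  obtain x x' n where X: "x \<noteq> []" "prefix x' x" "u = concat (replicate n x) @ x'"
     "of_nat n + of_nat (length x') / of_nat (length x) = \<beta>" using P unfolding is_power_def by blast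
  define U where "U = morph_apply mu u"
  have U: "U = map y [2*i+q..<2*i+q + length U]"
  proof (rule nth_equalityI)
    show "length U = length (map y [2*i+q..<2*i+q + length U])" by simp
  next
    fix t assume t: "t < length U"
    then have tl: "t div 2 < length u" unfolding U_def by simp
    have ut: "u ! (t div 2) = y (2*(i + t div 2)+q)" using ui tl by (metis add_less_cancel_left diff_add_inverse nth_map_upt)
    have "t = 2*(t div 2) \<or> t = 2*(t div 2) + 1" by arith
    then show "U ! t = map y [2*i+q..<2*i+q + length U] ! t"
    proof
      assume e: "t = 2*(t div 2)"
      have "U ! t = u ! (t div 2)" unfolding U_def using mu_nth[OF tl] e by metis
      also have "\<dots> = y (2*i + q + t)" using ut e by (simp add: algebra_simps)
      finally show ?thesis using t by simp
    next
      assume e: "t = 2*(t div 2) + 1"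
      have "U ! t = (\<not> u ! (t div 2))" unfolding U_def using mu_nth[OF tl] e by metis
      also have "\<dots> = y (2*(i + t div 2)+q+1)" using ut alt by metis
      also have "\<dots> = y (2*i + q + t)" using e by (metis add.assoc add.commute distrib_left)
      finally show ?thesis using t by simp
    qed
  qed
  have sw: "subword_of U y" unfolding subword_of_def using U by blast
  have "is_power U \<beta>"
    unfolding is_power_def
  proof (intro exI conjI)
    show "morph_apply mu x \<noteq> []" using X(1) by (metis len_mu length_0_conv mult_is_0 zero_neq_numeral)
    show "prefix (morph_apply mu x') (morph_apply mu x)" using X(2) by (rule ma_prefix)
    show "U = concat (replicate n (morph_apply mu x)) @ morph_apply mu x'"
      unfolding U_def X(3) by (simp add: ma_concat_replicate)
    show "of_nat n + of_nat (length (morph_apply mu x')) / of_nat (length (morph_apply mu x)) = \<beta>"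
      using X(4) X(1) by simp
  qed
  then show False using pf sw A unfolding power_free_def by blast
qed


lemma Phi_mono: "Phi G w k \<le> Phi G w (k + m)"
  by (induction m) (auto simp: Phi_Suc)

lemma Phi_mono': "k \<le> k' \<Longrightarrow> Phi G w k \<le> Phi G w k'"
  by (metis Phi_mono le_add_diff_inverse)

lemma Phi_even: "\<forall>x. even (length (G x)) \<Longrightarrow> even (Phi G w k)"
  by (induction k) (auto simp: Phi_Suc)

lemma Phi_ge: "\<forall>x. m \<le> length (G x) \<Longrightarrow> k * m \<le> Phi G w k"
proof (induction k)
  case 0 then show ?case by simp
next
  case (Suc k)
  then have a: "m \<le> length (G (w k))" by blast
  have b: "k * m \<le> Phi G w k" using Suc by blast
  show ?case using a b Phi_Suc[of G w k] by simp
qed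

lemma HV:
  assumes pl: "place G w y" and evl: "\<forall>x. even (length (G x))" and q: "q \<le> 1"
  defines "G' \<equiv> (\<lambda>x. map (\<lambda>j. G x ! (2*j+q)) [0..<length (G x) div 2])"
  shows "(\<forall>k. Phi G' w k = Phi G w k div 2) \<and> place G' w (\<lambda>j. y (2*j+q))"
proof -
  have P: "Phi G' w k = Phi G w k div 2" for k
  proof (induction k)
    case 0 then show ?case by simp
  next
    case (Suc k)
    have "even (Phi G w k)" using Phi_even[OF evl] by blast
    moreover have "even (length (G (w k)))" using evl by blast
    ultimately show ?case using Suc by (auto simp: Phi_Suc G'_def elim!: evenE)
  qed
  have "place G' w (\<lambda>j. y (2*j+q))"
    unfolding place_def
  proof (intro allI impI)
    fix k j assume j: "j < length (G' (w k))"
    then have j2: "2*j+q < length (G (w k))" unfolding G'_def using q evl by (auto elim!: evenE)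
    have "even (Phi G w k)" using Phi_even[OF evl] by blast
    then have "2 * (Phi G' w k + j) + q = Phi G w k + (2*j+q)" using P by (auto elim!: evenE)
    then have "y (2 * (Phi G' w k + j) + q) = G (w k) ! (2*j+q)" using pl j2 unfolding place_def by metis
    then show "y (2 * (Phi G' w k + j) + q) = G' (w k) ! j" using j unfolding G'_def by simp
  qed
  then show ?thesis using P by blast
qed

lemma GP:
  assumes W: "Wok w" and par: "\<forall>x. \<exists>b. \<forall>k. 1 \<le> k \<longrightarrow> w k = x \<longrightarrow> even (Phi G w k) = b"
  shows "\<forall>x. even (length (G x))"
proof -
  obtain bT where bT: "\<forall>k. 1 \<le> k \<longrightarrow> w k = True \<longrightarrow> even (Phi G w k) = bT" using spec[OF par, of True] by (elim exE)
  obtain bF where bF: "\<forall>k. 1 \<le> k \<longrightarrow> w k = False \<longrightarrow> even (Phi G w k) = bF" using spec[OF par, of False] by (elim exE)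
  have W1: "\<forall>x. \<exists>k\<ge>1. w k = x \<and> w (k+1) = x" using W unfolding Wok_def by (rule conjunct1)
  have W2: "\<forall>x. \<exists>k\<ge>1. w k = x \<and> w (k+1) = (\<not> x)" using W unfolding Wok_def by (rule conjunct2)
  obtain k1 where k1: "k1 \<ge> 1" "w k1 = True" "w (k1+1) = True" using spec[OF W1, of True] by (elim exE conjE)
  obtain k2 where k2: "k2 \<ge> 1" "w k2 = False" "w (k2+1) = True" using spec[OF W2, of False] by (elim exE conjE) simp
  obtain k3 where k3: "k3 \<ge> 1" "w k3 = True" "w (k3+1) = False" using spec[OF W2, of True] by (elim exE conjE) simp
  have a1: "even (Phi G w k1) = bT" "even (Phi G w (k1+1)) = bT" using bT k1 by auto
  have a2: "Phi G w (k1+1) = Phi G w k1 + length (G True)" using Phi_Suc[of G w k1] k1 by simp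
  have eT: "even (length (G True))" using a1 a2 by (cases bT; simp)
  have b1: "even (Phi G w k3) = bT" "even (Phi G w (k3+1)) = bF" using bT bF k3 by auto
  have b2: "Phi G w (k3+1) = Phi G w k3 + length (G True)" using Phi_Suc[of G w k3] k3 by simp
  have e3: "bF = bT" using b1 b2 eT by (cases bT; cases bF; simp)
  have c1: "even (Phi G w k2) = bF" "even (Phi G w (k2+1)) = bT" using bT bF k2 by auto
  have c2: "Phi G w (k2+1) = Phi G w k2 + length (G False)" using Phi_Suc[of G w k2] k2 by simp
  have "even (length (G False))" using c1 c2 e3 by (cases bT; cases bF; simp)
  then show ?thesis using eT by (metis (full_types))
qed

lemma DP:
  assumes pf: "power_free (7/3) y"
    and H: "\<forall>k. 1 \<le> k \<longrightarrow> w k = x \<longrightarrow> 1 \<le> pos k \<and> dbl y (pos k) \<and> pos k + d = Phi G w k + c"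
  shows "\<exists>b. \<forall>k. 1 \<le> k \<longrightarrow> w k = x \<longrightarrow> even (Phi G w k) = b"
proof (cases "\<exists>k0. 1 \<le> k0 \<and> w k0 = x")
  case False then show ?thesis by blast
next
  case True
  then obtain k0 where k0: "1 \<le> k0" "w k0 = x" by blast
  show ?thesis
  proof (intro exI allI impI)
    fix k assume k: "1 \<le> k" "w k = x"
    have "even (pos k) = even (pos k0)" using PL[OF pf] H k k0 by blast
    moreover have "pos k + d = Phi G w k + c" "pos k0 + d = Phi G w k0 + c" using H k k0 by auto
    ultimately show "even (Phi G w k) = even (Phi G w k0)"
      by (metis even_add)
  qed
qed

lemma TY:
  assumes pf: "power_free (7/3) y" and pl: "place G w y" and ev: "\<forall>k. even (Phi G w k)"
    and len: "\<forall>x. 2 \<le> length (G x)" and occ: "\<exists>k\<ge>1. w k = w 0"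
  shows "(\<forall>i. y (2*i) \<noteq> y (2*i+1)) \<or> (\<forall>i. y (2*i+1) \<noteq> y (2*i+2))"
proof -
  obtain d0 where d0: "1 \<le> d0" "dbl y d0" using dbl_exists[OF pf, of 1] by auto
  show ?thesis
  proof (cases "even d0")
    case True
    have "\<forall>i. y (2*i+1) \<noteq> y (2*i+2)"
    proof (intro allI notI)
      fix i assume "y (2*i+1) = y (2*i+2)"
      then have "dbl y (2*i+1)" unfolding dbl_def by simp
      then show False using PL[OF pf d0(1) _ d0(2), of "2*i+1"] True by simp
    qed
    then show ?thesis by blast
  next
    case odd: False
    have nd0: "\<not> dbl y 0"
    proof
      assume d: "dbl y 0"
      obtain k where k: "k \<ge> 1" "w k = w 0" using occ by blast
      have "Phi G w 1 \<le> Phi G w k" using Phi_mono' k by blast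
      moreover have "Phi G w 1 = length (G (w 0))" using Phi_Suc[of G w 0] by simp
      ultimately have pk: "2 \<le> Phi G w k" using len by (metis order_trans)
      have l2: "0 < length (G (w 0))" "1 < length (G (w 0))" using len by (metis less_le_trans zero_less_numeral, metis less_le_trans one_less_numeral_iff semiring_norm(76))
      have "\<forall>j. j < length (G (w k)) \<longrightarrow> y (Phi G w k + j) = G (w k) ! j"
        using pl unfolding place_def by blast
      then have pk0: "\<forall>j. j < length (G (w 0)) \<longrightarrow> y (Phi G w k + j) = G (w 0) ! j"
        using k(2) by simp
      have "y (Phi G w k + 0) = G (w 0) ! 0" "y (Phi G w k + 1) = G (w 0) ! 1"
        using pk0 l2 by blast+
      moreover have "y (Phi G w 0 + 0) = G (w 0) ! 0" "y (Phi G w 0 + 1) = G (w 0) ! 1"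
        using pl l2 unfolding place_def by blast+
      ultimately have "dbl y (Phi G w k)" using d unfolding dbl_def by simp
      then have "even (Phi G w k) = even d0" using PL[OF pf _ d0(1) _ d0(2)] pk by simp
      then show False using ev odd by blast
    qed
    have "\<forall>i. y (2*i) \<noteq> y (2*i+1)"
    proof (intro allI notI)
      fix i assume e: "y (2*i) = y (2*i+1)"
      then have "dbl y (2*i)" unfolding dbl_def by simp
      moreover have "i \<noteq> 0" using nd0 e unfolding dbl_def by (cases i) auto
      ultimately show False using PL[OF pf _ d0(1) _ d0(2), of "2*i"] odd by simp
    qed
    then show ?thesis by blast
  qed
qed




lemma place_at: "place G w y \<Longrightarrow> w k = x \<Longrightarrow> j < length (G x) \<Longrightarrow> y (Phi G w k + j) = G x ! j"
  unfolding place_def by blast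

lemma Phi_pos: "\<forall>x. m \<le> length (G x) \<Longrightarrow> 1 \<le> k \<Longrightarrow> m \<le> Phi G w k"
  using Phi_ge[of m G k w] by (metis le_trans mult_le_mono1 mult_1)

lemma prev_last:
  assumes pl: "place G w y" and len: "\<forall>x. 1 \<le> length (G x)" and last: "\<forall>x. G x ! (length (G x) - 1) = e"
    and k: "1 \<le> k"
  shows "y (Phi G w k - 1) = e"
proof -
  obtain k' where k': "k = Suc k'" using k by (cases k) auto
  have "1 \<le> length (G (w k'))" using len by blast
  then have l: "length (G (w k')) - 1 < length (G (w k'))" by simp
  have "Phi G w k - 1 = Phi G w k' + (length (G (w k')) - 1)" using k' Phi_Suc[of G w k'] len by (metis Nat.add_diff_assoc)
  then show ?thesis using place_at[OF pl refl l] last by simp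
qed

lemma BAD:
  assumes pfw: "power_free (7/3) w"
  shows "\<forall>G y e. length (G False) + length (G True) = s \<longrightarrow> power_free (7/3) y \<longrightarrow> place G w y
     \<longrightarrow> (\<forall>x. 1 \<le> length (G x)) \<longrightarrow> (\<forall>x. G x ! (length (G x) - 1) = e) \<longrightarrow> False"
proof (induction s rule: less_induct)
  case (less s)
  have W: "Wok w" using Wok[OF pfw] .
  have W1: "\<forall>x. \<exists>k\<ge>1. w k = x \<and> w (k+1) = x" using W unfolding Wok_def by (rule conjunct1)
  show ?case
  proof (intro allI impI)
    fix G y e
    assume s: "length (G False) + length (G True) = s" and pf: "power_free (7/3) y" and pl: "place G w y"
      and len: "\<forall>x. 1 \<le> length (G x)" and last: "\<forall>x. G x ! (length (G x) - 1) = e"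
    show False
    proof (cases "\<exists>x. length (G x) \<le> 3")
      case True
      then obtain x where x: "length (G x) \<le> 3" by blast
      define L where "L = length (G x)"
      have L1: "1 \<le> L" using len L_def by blast
      obtain k where k: "k \<ge> 1" "w k = x" "w (k+1) = x" using spec[OF W1, of x] by (elim exE conjE)
      have P1: "1 \<le> Phi G w k" using Phi_pos[OF len k(1)] .
      have PS: "Phi G w (k+1) = Phi G w k + L" using Phi_Suc[of G w k] k L_def by simp
      define i0 where "i0 = Phi G w k - 1"
      have i0: "i0 + 1 = Phi G w k" using P1 i0_def by simp
      have ye: "y i0 = e" using prev_last[OF pl len last k(1)] i0_def by simp
      have per: "\<forall>t. t + L < 2*L+1 \<longrightarrow> y (i0+t) = y (i0+t+L)"
      proof (intro allI impI)
        fix t assume t: "t + L < 2*L+1"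
        show "y (i0+t) = y (i0+t+L)"
        proof (cases t)
          case 0
          have "L - 1 < length (G x)" using L1 L_def by simp
          then have "y (Phi G w k + (L - 1)) = G x ! (L - 1)" using place_at[OF pl k(2)] by blast
          moreover have "i0 + L = Phi G w k + (L - 1)" using i0 L1 by simp
          ultimately show ?thesis using 0 ye last L_def by simp
        next
          case (Suc t')
          then have t': "t' < length (G x)" using t L_def by simp
          have "y (Phi G w k + t') = G x ! t'" using place_at[OF pl k(2) t'] .
          moreover have "y (Phi G w (k+1) + t') = G x ! t'" using place_at[OF pl k(3) t'] .
          moreover have e1: "i0 + t = Phi G w k + t'" using i0 Suc by simp
          moreover have e2: "i0 + t + L = Phi G w (k+1) + t'" using i0 Suc PS by simp
          ultimately show ?thesis by (metis e1 e2)
        qed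
      qed
      have "0 < L" "7*L \<le> 3*(2*L+1)" using L1 x L_def by auto
      then show False using forbid[OF pf _ _ per] by blast
    next
      case False
      have len4: "\<forall>x. 4 \<le> length (G x)"
      proof
        fix x have "\<not> length (G x) \<le> 3" using False by blast
        then show "4 \<le> length (G x)" by simp
      qed
      have par: "\<forall>x. \<exists>b. \<forall>k. 1 \<le> k \<longrightarrow> w k = x \<longrightarrow> even (Phi G w k) = b"
      proof
        fix x
        define lt where "lt t = (if t = 0 then e else G x ! (t - 1))" for t
        have LT: "y (Phi G w k - 1 + t) = lt t" if "1 \<le> k" "w k = x" "t \<le> 4" for k t
        proof (cases t)
          case 0 then show ?thesis using prev_last[OF pl len last that(1)] lt_def by simp
        next
          case (Suc t')
          then have t': "t' < length (G x)" using that(3) len4 by (metis Suc_le_lessD le_trans)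
          have "1 \<le> Phi G w k" using Phi_pos[OF len that(1)] .
          then have "Phi G w k - 1 + t = Phi G w k + t'" using Suc by simp
          then show ?thesis using place_at[OF pl that(2) t'] lt_def Suc by simp
        qed
        obtain k0 where k0: "k0 \<ge> 1" "w k0 = x" using spec[OF W1, of x] by blast
        have "\<exists>r<4. lt r = lt (r+1)"
        proof (rule ccontr)
          assume "\<not> ?thesis"
          then have "lt 0 \<noteq> lt 1" "lt 1 \<noteq> lt 2" "lt 2 \<noteq> lt 3" "lt 3 \<noteq> lt 4" by (auto simp: numeral_eq_Suc)
          moreover
          define P where "P = Phi G w k0 - 1"
          have LT': "\<forall>t\<le>4. y (P + t) = lt t" using LT[OF k0] unfolding P_def by blast
          have "y (P+0) = lt 0" "y (P+1) = lt 1" "y (P+2) = lt 2" "y (P+3) = lt 3" "y (P+4) = lt 4"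
            using LT'[rule_format, of 0] LT'[rule_format, of 1] LT'[rule_format, of 2] LT'[rule_format, of 3]
              LT'[rule_format, of 4] by simp_all
          ultimately show False using F2[OF pf, of P] by simp
        qed
        then obtain r where r: "r < 4" "lt r = lt (r+1)" by blast
        show "\<exists>b. \<forall>k. 1 \<le> k \<longrightarrow> w k = x \<longrightarrow> even (Phi G w k) = b"
        proof (rule DP[OF pf, where pos = "\<lambda>k. Phi G w k - 1 + r" and d = 1 and c = r], intro allI impI conjI)
          fix k assume k: "1 \<le> k" "w k = x"
          have P4: "4 \<le> Phi G w k" using Phi_pos[OF len4 k(1)] .
          show "1 \<le> Phi G w k - 1 + r" using P4 by simp
          show "Phi G w k - 1 + r + 1 = Phi G w k + r" using P4 by simp
          have "r \<le> 4" "r + 1 \<le> 4" using r by auto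
          then have "y (Phi G w k - 1 + r) = lt r" "y (Phi G w k - 1 + (r+1)) = lt (r+1)" using LT[OF k] by blast+
          then show "dbl y (Phi G w k - 1 + r)" unfolding dbl_def using r by (simp add: add.assoc)
        qed
      qed
      have evl: "\<forall>x. even (length (G x))" using GP[OF W par] .
      have ev: "\<forall>k. even (Phi G w k)" using Phi_even[OF evl] by blast
      have len2: "\<forall>x. 2 \<le> length (G x)"
      proof
        fix x have "4 \<le> length (G x)" using len4 by blast
        then show "2 \<le> length (G x)" by simp
      qed
      have occ: "\<exists>k\<ge>1. w k = w 0" using spec[OF W1, of "w 0"] by blast
      have T: "(\<forall>i. y (2*i) \<noteq> y (2*i+1)) \<or> (\<forall>i. y (2*i+1) \<noteq> y (2*i+2))" using TY[OF pf pl ev len2 occ] .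
      obtain q e' where q: "q \<le> 1" and alt: "\<forall>i. y (2*i+q) \<noteq> y (2*i+q+1)"
        and qe: "\<forall>x. G x ! (2*(length (G x) div 2 - 1) + q) = e'"
      proof (cases "\<forall>i. y (2*i) \<noteq> y (2*i+1)")
        case True
        have "\<forall>x. G x ! (2*(length (G x) div 2 - 1)) = (\<not> e)"
        proof
          fix x
          obtain k where k: "w k = x" using spec[OF W1, of x] by blast
          define L where "L = length (G x)"
          have L4: "4 \<le> L" "even L" using len4 evl L_def by auto
          have a: "2*(L div 2 - 1) = L - 2" using L4 by (auto elim!: evenE)
          have "L - 2 < length (G x)" "L - 1 < length (G x)" using L4 L_def by auto
          then have A: "y (Phi G w k + (L-2)) = G x ! (L-2)" and B: "y (Phi G w k + (L-1)) = G x ! (L-1)"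
            using place_at[OF pl k] by blast+
          have "even (Phi G w k + (L-2))" using ev L4 by simp
          then obtain i where D: "Phi G w k + (L-2) = 2*i" by (elim evenE)
          have C: "Phi G w k + (L-1) = 2*i + 1" using L4 D by simp
          have "y (2*i) = G x ! (L-2)" using A D by metis
          moreover have "y (2*i+1) = G x ! (L-1)" using B C by metis
          ultimately have "G x ! (L-2) \<noteq> G x ! (L-1)" using True[rule_format, of i] by simp
          then show "G x ! (2*(length (G x) div 2 - 1)) = (\<not> e)" using last a L_def by metis
        qed
        then show ?thesis using that[of 0 "\<not> e"] True by simp
      next
        case False
        then have "\<forall>i. y (2*i+1) \<noteq> y (2*i+2)" using T by blast
        then have "\<forall>i. y (2*i+1) \<noteq> y (2*i+1+1)" by (simp add: numeral_eq_Suc)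
        moreover have "\<forall>x. G x ! (2*(length (G x) div 2 - 1) + 1) = e"
        proof
          fix x
          have L4: "4 \<le> length (G x)" "even (length (G x))" using len4 evl by auto
          then have "2*(length (G x) div 2 - 1) + 1 = length (G x) - 1" by (auto elim!: evenE)
          then show "G x ! (2*(length (G x) div 2 - 1) + 1) = e" using last by simp
        qed
        ultimately show ?thesis using that[of 1 e] by simp
      qed
      define G' where "G' = (\<lambda>x. map (\<lambda>j. G x ! (2*j+q)) [0..<length (G x) div 2])"
      have H: "place G' w (\<lambda>j. y (2*j+q))" using HV[OF pl evl q] unfolding G'_def by blast
      have pf': "power_free (7/3) (\<lambda>j. y (2*j+q))" using pf_half[OF pf alt] .
      have lenG': "\<forall>x. length (G' x) = length (G x) div 2" unfolding G'_def by simp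
      have len': "\<forall>x. 1 \<le> length (G' x)"
      proof
        fix x have "4 \<le> length (G x)" using len4 by blast
        then show "1 \<le> length (G' x)" using lenG' by simp
      qed
      have last': "\<forall>x. G' x ! (length (G' x) - 1) = e'"
      proof
        fix x
        have "4 \<le> length (G x)" using len4 by blast
        then have "length (G' x) - 1 < length (G x) div 2" using lenG' by simp
        then show "G' x ! (length (G' x) - 1) = e'" using qe lenG' unfolding G'_def by simp
      qed
      have "4 \<le> length (G False)" "4 \<le> length (G True)" using len4 by blast+
      then have lt: "length (G' False) + length (G' True) < s" using lenG' s by simp
      show False using less.IH[OF lt] pf' H len' last' by blast
    qed
  qed
qed




definition fixeq :: "morphism \<Rightarrow> (nat \<Rightarrow> bool) \<Rightarrow> bool" where
  "fixeq h w \<longleftrightarrow> (\<forall>n. \<exists>m. morph_apply h (pref w n) = pref w m)"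

lemma fixed_point_fixeq: "fixed_point h w \<Longrightarrow> fixeq h w"
  unfolding fixed_point_def fixeq_def
proof (intro allI)
  fix n assume "(\<forall>n. prefix (morph_apply h (pref w n)) (pref w (length (morph_apply h (pref w n))))) \<and>
     (\<forall>N. \<exists>n. N \<le> length (morph_apply h (pref w n)))"
  then have p: "prefix (morph_apply h (pref w n)) (pref w (length (morph_apply h (pref w n))))" by blast
  then obtain zs where "pref w (length (morph_apply h (pref w n))) = morph_apply h (pref w n) @ zs"
    unfolding prefix_def by blast
  moreover have "length (pref w (length (morph_apply h (pref w n)))) = length (morph_apply h (pref w n))" by simp
  ultimately have "zs = []" by (metis append_eq_append_conv append_Nil2)
  then show "\<exists>m. morph_apply h (pref w n) = pref w m"
    by (metis \<open>pref w (length (morph_apply h (pref w n))) = morph_apply h (pref w n) @ zs\<close> append_Nil2)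
qed

lemma fixeq_place: assumes "fixeq h w" shows "place h w w"
  unfolding place_def
proof (intro allI impI)
  fix k j assume j: "j < length (h (w k))"
  obtain m where m: "morph_apply h (pref w (Suc k)) = pref w m" using assms unfolding fixeq_def by blast
  have e: "morph_apply h (pref w (Suc k)) = morph_apply h (pref w k) @ h (w k)" by (simp add: pref_Suc)
  have lm: "m = Phi h w k + length (h (w k))" using m e unfolding Phi_def by (metis length_append pref_len)
  have "pref w m ! (Phi h w k + j) = (morph_apply h (pref w k) @ h (w k)) ! (Phi h w k + j)" using m e by simp
  also have "\<dots> = h (w k) ! j" unfolding Phi_def by (simp add: nth_append)
  finally show "w (Phi h w k + j) = h (w k) ! j" using lm j by simp
qed

definition mcomp :: "morphism \<Rightarrow> morphism \<Rightarrow> morphism" where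
  "mcomp g h = (\<lambda>x. morph_apply g (h x))"

lemma ma_mcomp: "morph_apply (mcomp g h) u = morph_apply g (morph_apply h u)"
  by (induction u) (auto simp: mcomp_def)

lemma fixeq_mcomp: "fixeq g w \<Longrightarrow> fixeq h w \<Longrightarrow> fixeq (mcomp g h) w"
  unfolding fixeq_def ma_mcomp by metis

lemma ma_id: "morph_apply id_morph u = u" by (induction u) (auto simp: id_morph_def)

lemma fixeq_id: "fixeq id_morph w" unfolding fixeq_def ma_id by blast

fun mpow :: "morphism \<Rightarrow> nat \<Rightarrow> morphism" where
  "mpow h 0 = id_morph"
| "mpow h (Suc n) = mcomp h (mpow h n)"

lemma fixeq_mpow: "fixeq h w \<Longrightarrow> fixeq (mpow h n) w"
  by (induction n) (auto simp: fixeq_id fixeq_mcomp)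

lemma len_ma_ge: "(\<forall>x. m \<le> length (h x)) \<Longrightarrow> m * length u \<le> length (morph_apply h u)"
  by (induction u) (auto simp: add_mono)

lemma Phi_unb: "fixed_point h w \<Longrightarrow> \<exists>n. N \<le> Phi h w n"
  unfolding fixed_point_def Phi_def by blast

lemma erasing_false:
  assumes pf: "power_free (7/3) w" and fp: "fixed_point h w" and z: "h z = []"
  shows False
proof -
  have pl: "place h w w" using fixeq_place[OF fixed_point_fixeq[OF fp]] .
  show False
  proof (cases "h (\<not> z) = []")
    case True
    have "\<forall>x. h x = []"
    proof
      fix x show "h x = []" using True z by (cases x; cases z) auto
    qed
    then have "Phi h w n = 0" for n by (induction n) (auto simp: Phi_Suc)
    then show False using Phi_unb[OF fp, of 1] by simp
  next
    case False
    define x where "x = (\<not> z)"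
    define L where "L = length (h x)"
    have L: "0 < L" using False x_def L_def by simp
    have hz: "\<And>k. w k = z \<Longrightarrow> Phi h w (Suc k) = Phi h w k" using z by (simp add: Phi_Suc)
    have hx: "\<And>k. w k = x \<Longrightarrow> Phi h w (Suc k) = Phi h w k + L" using L_def by (simp add: Phi_Suc)
    have nxt: "\<exists>k'. w k' = x \<and> Phi h w k' = Phi h w k" for k
    proof -
      have "\<not> (w k = z \<and> w (k+1) = z \<and> w (k+2) = z)" using F1[OF pf, of k] by auto
      then consider "w k = x" | "w k = z" "w (k+1) = x" | "w k = z" "w (k+1) = z" "w (k+2) = x"
        unfolding x_def by (metis (full_types))
      then show ?thesis
      proof cases
        case 1 then show ?thesis by blast
      next
        case 2 then show ?thesis using hz[of k] by (intro exI[of _ "k+1"]) simp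
      next
        case 3 then show ?thesis using hz[of k] hz[of "k+1"] by (intro exI[of _ "k+2"]) (simp add: numeral_eq_Suc)
      qed
    qed
    have Q: "\<exists>k. w k = x \<and> Phi h w k = q * L" for q
    proof (induction q)
      case 0 then show ?case using nxt[of 0] by simp
    next
      case (Suc q)
      then obtain k where k: "w k = x" "Phi h w k = q * L" by blast
      then have "Phi h w (Suc k) = Suc q * L" using hx by simp
      then show ?case using nxt[of "Suc k"] by metis
    qed
    have W: "w (q * L + j) = h x ! j" if "j < L" for q j
    proof -
      obtain k where k: "w k = x" "Phi h w k = q * L" using Q by blast
      show ?thesis using place_at[OF pl k(1)] k(2) that L_def by simp
    qed
    have per: "\<forall>t. t + L < 3*L \<longrightarrow> w (0+t) = w (0+t+L)"
    proof (intro allI impI)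
      fix t
      have "t = (t div L) * L + t mod L" by simp
      moreover have "t + L = (Suc (t div L)) * L + t mod L" by simp
      moreover have "t mod L < L" using L by simp
      ultimately show "w (0+t) = w (0+t+L)" using W by (metis add_0)
    qed
    show False using forbid[OF pf L _ per] by simp
  qed
qed




lemma int_par:
  assumes pf: "power_free (7/3) w" and pl: "place g w w" and len: "\<forall>y. 1 \<le> length (g y)"
    and l5: "5 \<le> length (g x)"
  shows "\<exists>b. \<forall>k. 1 \<le> k \<longrightarrow> w k = x \<longrightarrow> even (Phi g w k) = b"
proof (cases "\<exists>k0\<ge>1. w k0 = x")
  case False then show ?thesis by blast
next
  case True
  then obtain k0 where k0: "k0 \<ge> 1" "w k0 = x" by blast
  have "\<exists>r<4. g x ! r = g x ! (r+1)"
  proof (rule ccontr)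
    assume "\<not> ?thesis"
    then have n: "g x ! 0 \<noteq> g x ! 1" "g x ! 1 \<noteq> g x ! 2" "g x ! 2 \<noteq> g x ! 3" "g x ! 3 \<noteq> g x ! 4"
      by (auto simp: numeral_eq_Suc)
    define P where "P = Phi g w k0"
    have PA: "\<forall>j. j < length (g x) \<longrightarrow> w (P + j) = g x ! j" using place_at[OF pl k0(2)] unfolding P_def by blast
    have j: "0 < length (g x)" "1 < length (g x)" "2 < length (g x)" "3 < length (g x)" "4 < length (g x)"
      using l5 by linarith+
    have "w P = g x ! 0" using PA j(1) by (metis add_0_right)
    moreover have "w (P+1) = g x ! 1" using PA j(2) by blast
    moreover have "w (P+2) = g x ! 2" using PA j(3) by blast
    moreover have "w (P+3) = g x ! 3" using PA j(4) by blast
    moreover have "w (P+4) = g x ! 4" using PA j(5) by blast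
    ultimately show False using F2[OF pf, of P] n by simp
  qed
  then obtain r where r: "r < 4" "g x ! r = g x ! (r+1)" by blast
  show ?thesis
  proof (rule DP[OF pf, where pos = "\<lambda>k. Phi g w k + r" and d = 0 and c = r], intro allI impI conjI)
    fix k assume k: "1 \<le> k" "w k = x"
    have "1 \<le> Phi g w k" using Phi_pos[OF len k(1)] by blast
    then show "1 \<le> Phi g w k + r" by simp
    show "Phi g w k + r + 0 = Phi g w k + r" by simp
    have "r < length (g x)" "r + 1 < length (g x)" using r l5 by auto
    then have "w (Phi g w k + r) = g x ! r" "w (Phi g w k + (r+1)) = g x ! (r+1)"
      using place_at[OF pl k(2)] by blast+
    then show "dbl w (Phi g w k + r)" unfolding dbl_def using r by (simp add: add.assoc)
  qed
qed

lemma len1_id: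
  assumes pf: "power_free (7/3) w" and pl: "place h w w" and l: "\<forall>x. length (h x) = 1"
  shows "h = id_morph"
proof
  fix x
  have P: "Phi h w k = k" for k by (induction k) (auto simp: Phi_Suc l)
  have "\<exists>k\<ge>1. w k = x \<and> w (k+1) = x" using Wok[OF pf] unfolding Wok_def by blast
  then obtain k where k: "w k = x" by blast
  have "w (Phi h w k + 0) = h x ! 0" using place_at[OF pl k] l by simp
  then have "h x ! 0 = x" using P k by simp
  moreover have "length (h x) = 1" using l by blast
  ultimately show "h x = id_morph x" unfolding id_morph_def
    by (cases "h x") auto
qed

lemma caseb:
  assumes pf: "power_free (7/3) w" and fq: "fixeq h w" and z: "h z = [z]" and l2: "2 \<le> length (h (\<not> z))"
  shows False
proof -
  define x where "x = (\<not> z)"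
  have pl: "place h w w" using fixeq_place[OF fq] .
  have len1: "\<forall>y. 1 \<le> length (h y)"
  proof
    fix y show "1 \<le> length (h y)"
    proof (cases "y = z")
      case True then show ?thesis using z by simp
    next
      case False then have "y = (\<not> z)" by auto
      then show ?thesis using l2 by simp
    qed
  qed
  have lx: "0 < length (h x)" using l2 unfolding x_def by linarith
  have hx0: "h x ! 0 = x"
  proof -
    have "\<not> (w 0 = z \<and> w (0+1) = z \<and> w (0+2) = z)" using F1[OF pf, of 0] by auto
    then consider "w 0 = x" | "w 0 = z" "w 1 = x" | "w 0 = z" "w 1 = z" "w 2 = x"
      unfolding x_def by (metis (full_types) add_0)
    then show ?thesis
    proof cases
      case 1 then show ?thesis using place_at[OF pl 1 lx] by simp
    next
      case 2
      have "Phi h w 1 = 1" using Phi_Suc[of h w 0] 2 z by simp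
      then show ?thesis using place_at[OF pl 2(2) lx] 2 by simp
    next
      case 3
      have "Phi h w 2 = 2" using Phi_Suc[of h w 0] Phi_Suc[of h w 1] 3 z by (simp add: numeral_eq_Suc)
      then show ?thesis using place_at[OF pl 3(3) lx] 3 by simp
    qed
  qed
  have M: "mpow h n z = [z] \<and> mpow h n x \<noteq> [] \<and> mpow h n x ! 0 = x \<and> n + 1 \<le> length (mpow h n x)" for n
  proof (induction n)
    case 0 then show ?case by (simp add: id_morph_def)
  next
    case (Suc n)
    then have I1: "mpow h n z = [z]" and I2: "mpow h n x \<noteq> []" and I3: "mpow h n x ! 0 = x"
      and I4: "n + 1 \<le> length (mpow h n x)" by blast+
    obtain u' where u: "mpow h n x = x # u'" using I2 I3 by (cases "mpow h n x") auto
    have A: "mpow h (Suc n) x = h x @ morph_apply h u'" by (simp add: mcomp_def u)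
    have B: "mpow h (Suc n) z = [z]" by (simp add: mcomp_def I1 z)
    have "length u' \<le> length (morph_apply h u')" using len_ma_ge[of 1 h u'] len1 by simp
    moreover have "length (mpow h n x) = Suc (length u')" using u by simp
    moreover have "2 \<le> length (h x)" using l2 x_def by simp
    ultimately have C: "n + 2 \<le> length (mpow h (Suc n) x)" using A I4 by simp
    have D: "mpow h (Suc n) x ! 0 = x" using A lx hx0 by (simp add: nth_append)
    show ?case using B C D by auto
  qed
  define g where "g = mpow h 4"
  have fg: "fixeq g w" unfolding g_def using fixeq_mpow[OF fq] .
  have plg: "place g w w" using fixeq_place[OF fg] .
  have gz: "g z = [z]" and gx: "5 \<le> length (g x)" using M[of 4] g_def by auto
  have leng: "\<forall>y. 1 \<le> length (g y)"
  proof
    fix y show "1 \<le> length (g y)"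
    proof (cases "y = z")
      case True then show ?thesis using gz by simp
    next
      case False then have "y = x" using x_def by auto
      then show ?thesis using gx by simp
    qed
  qed
  obtain b where b: "\<forall>k. 1 \<le> k \<longrightarrow> w k = x \<longrightarrow> even (Phi g w k) = b" using int_par[OF pf plg leng gx] by blast
  have "\<exists>k\<ge>1. w k = x \<and> w (k+1) = x" using Wok[OF pf] unfolding Wok_def by blast
  then obtain k1 where k1: "k1 \<ge> 1" "w k1 = x" "w (k1+1) = x" by blast
  have "Phi g w (k1+1) = Phi g w k1 + length (g x)" using Phi_Suc[of g w k1] k1 by simp
  moreover have "even (Phi g w k1) = b" "even (Phi g w (k1+1)) = b" using b k1 by auto
  ultimately have ev: "even (length (g x))" by (cases b) auto
  obtain k2 where k2: "k2 \<ge> 1" "w k2 = x" "w (k2+1) = z" "w (k2+2) = x" using xzx_exists[OF pf, of x] x_def by auto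
  have "Phi g w (k2+2) = Phi g w k2 + length (g x) + 1" using Phi_Suc[of g w k2] Phi_Suc[of g w "k2+1"] k2 gz
    by (simp add: numeral_eq_Suc)
  moreover have "even (Phi g w k2) = b" "even (Phi g w (k2+2)) = b" using b k2 by auto
  ultimately show False using ev by (cases b) auto
qed




lemma pref_add: "pref v (a + b) = pref v a @ map v [a..<a+b]"
  unfolding pref_def using upt_add_eq_append[of 0 a b] by simp

lemma place_fixed:
  assumes pl: "place K v v" and len: "\<forall>x. 1 \<le> length (K x)"
  shows "fixed_point K v"
proof -
  have E: "morph_apply K (pref v n) = pref v (Phi K v n)" for n
  proof (induction n)
    case 0 then show ?case by (simp add: pref_def)
  next
    case (Suc n)
    have m: "map v [Phi K v n..<Phi K v n + length (K (v n))] = K (v n)"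
    proof (rule nth_equalityI)
      show "length (map v [Phi K v n..<Phi K v n + length (K (v n))]) = length (K (v n))" by simp
    next
      fix j assume "j < length (map v [Phi K v n..<Phi K v n + length (K (v n))])"
      then have j: "j < length (K (v n))" by simp
      then show "map v [Phi K v n..<Phi K v n + length (K (v n))] ! j = K (v n) ! j"
        using place_at[OF pl refl j] by simp
    qed
    have "morph_apply K (pref v (Suc n)) = pref v (Phi K v n) @ K (v n)" using Suc by (simp add: pref_Suc)
    also have "\<dots> = pref v (Phi K v (Suc n))" unfolding Phi_Suc pref_add m ..
    finally show ?case .
  qed
  show ?thesis unfolding fixed_point_def
  proof (intro conjI allI)
    fix n show "prefix (morph_apply K (pref v n)) (pref v (length (morph_apply K (pref v n))))"
      using E[of n] by simp
  next
    fix N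
    have "N * 1 \<le> Phi K v N" using Phi_ge[OF len] by blast
    then show "\<exists>n. N \<le> length (morph_apply K (pref v n))" unfolding Phi_def by auto
  qed
qed

lemma mpow_len: "\<forall>x. 2 \<le> length (g x) \<Longrightarrow> 2^n \<le> length (mpow g n x)"
proof (induction n arbitrary: x)
  case 0 then show ?case by (simp add: id_morph_def)
next
  case (Suc n)
  have "2 * length (mpow g n x) \<le> length (morph_apply g (mpow g n x))" using len_ma_ge[of 2 g] Suc.prems by blast
  moreover have "2^n \<le> length (mpow g n x)" using Suc by blast
  ultimately show ?case by (simp add: mcomp_def)
qed




lemma good_len:
  assumes pf: "power_free (7/3) w" and fp: "fixed_point h w" and h: "h \<noteq> id_morph"
  shows "\<forall>x. 2 \<le> length (mcomp h h x)"
proof -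
  have fq: "fixeq h w" using fixed_point_fixeq[OF fp] .
  have pl: "place h w w" using fixeq_place[OF fq] .
  have ne: "\<forall>x. 1 \<le> length (h x)"
  proof
    fix x show "1 \<le> length (h x)"
    proof (rule ccontr)
      assume "\<not> 1 \<le> length (h x)"
      then have "h x = []" by (cases "h x") auto
      then show False using erasing_false[OF pf fp] by blast
    qed
  qed
  have n1: "\<not> (\<forall>x. length (h x) = 1)" using len1_id[OF pf pl] h by blast
  have nz: "\<forall>z. h z \<noteq> [z]"
  proof (intro allI notI)
    fix z assume z: "h z = [z]"
    have "length (h (\<not> z)) \<noteq> 1"
    proof
      assume l: "length (h (\<not> z)) = 1"
      have "\<forall>x. length (h x) = 1"
      proof
        fix x show "length (h x) = 1"
        proof (cases "x = z")
          case True then show ?thesis using z by simp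
        next
          case False then have "x = (\<not> z)" by auto
          then show ?thesis using l by simp
        qed
      qed
      then show False using n1 by blast
    qed
    moreover have "1 \<le> length (h (\<not> z))" using ne by blast
    ultimately have "2 \<le> length (h (\<not> z))" by arith
    then show False using caseb[OF pf fq z] by blast
  qed
  show ?thesis
  proof
    fix x
    show "2 \<le> length (mcomp h h x)"
    proof (cases "2 \<le> length (h x)")
      case True
      then show ?thesis using len_ma_ge[of 1 h "h x"] ne by (simp add: mcomp_def)
    next
      case False
      moreover have "1 \<le> length (h x)" using ne by blast
      ultimately have "length (h x) = 1" by arith
      then obtain a where a: "h x = [a]" by (cases "h x") auto
      have "h x \<noteq> [x]" using nz by blast
      then have ax: "a = (\<not> x)" using a by (cases a; cases x) auto
      have "length (h (\<not> x)) \<noteq> 1"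
      proof
        assume l: "length (h (\<not> x)) = 1"
        have "\<forall>y. length (h y) = 1"
        proof
          fix y show "length (h y) = 1"
          proof (cases "y = x")
            case True then show ?thesis using a by simp
          next
            case False then have "y = (\<not> x)" by auto
            then show ?thesis using l by simp
          qed
        qed
        then show False using n1 by blast
      qed
      moreover have "1 \<le> length (h (\<not> x))" using ne by blast
      ultimately have "2 \<le> length (h (\<not> x))" by arith
      then show ?thesis using a ax by (simp add: mcomp_def)
    qed
  qed
qed


lemma main_step:
  assumes pf: "power_free (7/3) w" and h: "h \<noteq> id_morph" and fp: "fixed_point h w"
  shows "\<exists>y. (\<forall>i. w (2*i) = y i \<and> w (2*i+1) = (\<not> y i)) \<and> power_free (7/3) y \<and> (\<exists>K. K \<noteq> id_morph \<and> fixed_point K y)"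
proof -
  have fq: "fixeq h w" using fixed_point_fixeq[OF fp] .
  define g where "g = mpow (mcomp h h) 3"
  have fg: "fixeq g w" unfolding g_def using fixeq_mpow[OF fixeq_mcomp[OF fq fq]] .
  have plg: "place g w w" using fixeq_place[OF fg] .
  have l8: "\<forall>x. 8 \<le> length (g x)"
  proof
    fix x have "2^3 \<le> length (g x)" unfolding g_def using mpow_len[OF good_len[OF pf fp h]] by blast
    then show "8 \<le> length (g x)" by simp
  qed
  have l5: "\<forall>x. 5 \<le> length (g x)"
  proof fix x have "8 \<le> length (g x)" using l8 by blast then show "5 \<le> length (g x)" by simp qed
  have l2: "\<forall>x. 2 \<le> length (g x)"
  proof fix x have "8 \<le> length (g x)" using l8 by blast then show "2 \<le> length (g x)" by simp qed
  have l1: "\<forall>x. 1 \<le> length (g x)"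
  proof fix x have "8 \<le> length (g x)" using l8 by blast then show "1 \<le> length (g x)" by simp qed
  have W: "Wok w" using Wok[OF pf] .
  have W1: "\<forall>x. \<exists>k\<ge>1. w k = x \<and> w (k+1) = x" using W unfolding Wok_def by (rule conjunct1)
  have W2: "\<forall>x. \<exists>k\<ge>1. w k = x \<and> w (k+1) = (\<not> x)" using W unfolding Wok_def by (rule conjunct2)
  have par: "\<forall>x. \<exists>b. \<forall>k. 1 \<le> k \<longrightarrow> w k = x \<longrightarrow> even (Phi g w k) = b"
  proof
    fix x show "\<exists>b. \<forall>k. 1 \<le> k \<longrightarrow> w k = x \<longrightarrow> even (Phi g w k) = b"
      using int_par[OF pf plg l1] l5 by blast
  qed
  have evl: "\<forall>x. even (length (g x))" using GP[OF W par] .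
  have ev: "\<forall>k. even (Phi g w k)" using Phi_even[OF evl] by blast
  have occ: "\<exists>k\<ge>1. w k = w 0" using spec[OF W1, of "w 0"] by blast
  have T: "(\<forall>i. w (2*i) \<noteq> w (2*i+1)) \<or> (\<forall>i. w (2*i+1) \<noteq> w (2*i+2))" using TY[OF pf plg ev l2 occ] .
  show ?thesis
  proof (cases "\<forall>i. w (2*i) \<noteq> w (2*i+1)")
    case True
    define y where "y = (\<lambda>j. w (2*j+0))"
    define G' where "G' = (\<lambda>x. map (\<lambda>j. g x ! (2*j+0)) [0..<length (g x) div 2])"
    have HV': "(\<forall>k. Phi G' w k = Phi g w k div 2) \<and> place G' w y"
      using HV[OF plg evl, of 0] unfolding G'_def y_def by simp
    have plG': "place G' w y" using HV' by blast
    have alt: "\<forall>i. w (2*i+0) \<noteq> w (2*i+0+1)" using True by simp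
    have pfy: "power_free (7/3) y" unfolding y_def using pf_half[OF pf alt] .
    have wy: "\<forall>i. w (2*i) = y i \<and> w (2*i+1) = (\<not> y i)" using True unfolding y_def by simp
    have lenG': "\<forall>x. length (G' x) = length (g x) div 2" unfolding G'_def by simp
    have l1': "\<forall>x. 1 \<le> length (G' x)"
    proof
      fix x have "8 \<le> length (g x)" using l8 by blast
      then show "1 \<le> length (G' x)" using lenG' by simp
    qed
    define K where "K = (\<lambda>x. G' x @ G' (\<not> x))"
    have PK: "Phi K y k = Phi G' w (2*k)" for k
    proof (induction k)
      case 0 then show ?case by simp
    next
      case (Suc k)
      have "Phi G' w (2 * Suc k) = Phi G' w (Suc (Suc (2*k)))" by simp
      also have "\<dots> = Phi G' w (2*k) + length (G' (w (2*k))) + length (G' (w (2*k+1)))"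
        by (simp add: Phi_Suc)
      also have "\<dots> = Phi K y k + length (K (y k))" using Suc wy unfolding K_def by simp
      finally show ?case by (simp add: Phi_Suc)
    qed
    have plK: "place K y y"
      unfolding place_def
    proof (intro allI impI)
      fix k j assume j: "j < length (K (y k))"
      show "y (Phi K y k + j) = K (y k) ! j"
      proof (cases "j < length (G' (y k))")
        case True
        have "w (2*k) = y k" using wy by blast
        then have "y (Phi G' w (2*k) + j) = G' (y k) ! j" using place_at[OF plG' _ True] by blast
        then show ?thesis using PK True unfolding K_def by (simp add: nth_append)
      next
        case False
        define j' where "j' = j - length (G' (y k))"
        have j': "j' < length (G' (\<not> y k))" using j False unfolding j'_def K_def by simp
        have "w (2*k+1) = (\<not> y k)" using wy by blast
        then have "y (Phi G' w (2*k+1) + j') = G' (\<not> y k) ! j'" using place_at[OF plG' _ j'] by blast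
        moreover have "Phi G' w (2*k+1) = Phi G' w (2*k) + length (G' (y k))"
          using Phi_Suc[of G' w "2*k"] wy by simp
        ultimately show ?thesis using PK False unfolding K_def j'_def by (simp add: nth_append)
      qed
    qed
    have l1K: "\<forall>x. 1 \<le> length (K x)" using l1' unfolding K_def by (simp add: le_add1 trans_le_add1)
    have fK: "fixed_point K y" using place_fixed[OF plK l1K] .
    have "K \<noteq> id_morph"
    proof
      assume "K = id_morph"
      then have "length (K True) = 1" by (simp add: id_morph_def)
      moreover have "1 \<le> length (G' True)" "1 \<le> length (G' False)" using l1' by blast+
      ultimately show False unfolding K_def by simp
    qed
    then show ?thesis using wy pfy fK by blast
  next
    case False
    then have T3: "\<forall>i. w (2*i+1) \<noteq> w (2*i+2)" using T by blast
    define lst where "lst x = g x ! (length (g x) - 1)" for x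
    have J: "lst (w k) \<noteq> g (w (k+1)) ! 0" for k
    proof -
      have e: "even (Phi g w (k+1))" using ev by blast
      have "2 \<le> Phi g w (k+1)" using Phi_pos[OF l2, of "k+1" w] by simp
      moreover obtain m where m: "Phi g w (k+1) = 2*m" using e by (elim evenE)
      ultimately have "1 \<le> m" by simp
      define i where "i = m - 1"
      have i: "Phi g w (k+1) = 2*i+2" using m \<open>1 \<le> m\<close> unfolding i_def by simp
      have "length (g (w k)) - 1 < length (g (w k))" using l1 by (simp add: Suc_le_eq)
      then have "w (Phi g w k + (length (g (w k)) - 1)) = lst (w k)" using place_at[OF plg refl] lst_def by blast
      moreover have "Phi g w k + (length (g (w k)) - 1) = 2*i+1"
      proof -
        have "1 \<le> length (g (w k))" using l1 by blast
        moreover have "Phi g w (k+1) = Phi g w k + length (g (w k))" using Phi_Suc[of g w k] by simp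
        ultimately show ?thesis using i by simp
      qed
      moreover have "0 < length (g (w (k+1)))" using l1 by (simp add: Suc_le_eq)
      then have "w (Phi g w (k+1) + 0) = g (w (k+1)) ! 0" using place_at[OF plg refl] by blast
      ultimately show ?thesis using T3[rule_format, of i] i by (simp add: numeral_eq_Suc)
    qed
    have J': "lst x \<noteq> g z ! 0" if "w k = x" "w (k+1) = z" for k x z using J[of k] that by simp
    obtain k1 where "w k1 = True" "w (k1+1) = True" using spec[OF W1, of True] by blast
    then have p1: "lst True \<noteq> g True ! 0" using J' by blast
    obtain k2 where "w k2 = False" "w (k2+1) = True" using spec[OF W2, of False] by auto
    then have p2: "lst False \<noteq> g True ! 0" using J' by blast
    have eqL: "lst False = lst True" using p1 p2 by (cases "lst False"; cases "lst True"; cases "g True ! 0") auto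
    have cl: "\<forall>x. g x ! (length (g x) - 1) = lst True"
    proof
      fix x show "g x ! (length (g x) - 1) = lst True"
      proof (cases x)
        case True then show ?thesis unfolding lst_def by simp
      next
        case False then show ?thesis using eqL unfolding lst_def by simp
      qed
    qed
    have False using BAD[OF pf] pf plg l1 cl by blast
    then show ?thesis ..
  qed
qed




definition TT :: "bool \<Rightarrow> nat \<Rightarrow> bool list" where
  "TT a n = (morph_apply mu ^^ n) [a]"

lemma TT_Suc: "TT a (Suc n) = morph_apply mu (TT a n)" by (simp add: TT_def)
lemma TT_len: "length (TT a n) = 2^n" by (induction n) (auto simp: TT_Suc TT_def)
lemma TT_prefix: "prefix (TT a n) (TT a (Suc n))"
proof (induction n)
  case 0 then show ?case by (simp add: TT_def mu_def)
next
  case (Suc n) then show ?case unfolding TT_Suc[of a "Suc n"] TT_Suc[of a n] by (rule ma_prefix)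
qed
lemma TT_prefix': "prefix (TT a n) (TT a (n + m))"
proof (induction m)
  case 0 then show ?case by simp
next
  case (Suc m) then show ?case using TT_prefix[of a "n+m"] by (metis add_Suc_right prefix_order.trans)
qed
lemma TT_nth: assumes "i < 2^n" "i < 2^n'" shows "TT a n ! i = TT a n' ! i"
proof -
  have "prefix (TT a n) (TT a (n + n'))" "prefix (TT a n') (TT a (n' + n))" using TT_prefix' by blast+
  then show ?thesis using assms TT_len by (metis add.commute prefix_def nth_append)
qed

lemma tm_eq: "i < 2^n \<Longrightarrow> thue_morse a i = TT a n ! i"
proof -
  assume "i < 2^n"
  moreover have "i < 2^(Suc i)" using less_exp[of i] by (simp, linarith)
  ultimately have "TT a (Suc i) ! i = TT a n ! i" using TT_nth[of i "Suc i" n a] by simp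
  then show ?thesis unfolding thue_morse_def TT_def by simp
qed

lemma tm_0: "thue_morse a 0 = a" unfolding thue_morse_def by (simp add: mu_def)

lemma tm_even: "thue_morse a (2*i) = thue_morse a i \<and> thue_morse a (2*i+1) = (\<not> thue_morse a i)"
proof -
  have i: "i < 2^(Suc i)" using less_exp[of i] by (simp, linarith)
  have li: "i < length (TT a (Suc i))" using i TT_len by simp
  have "2*i < 2^(Suc (Suc i))" "2*i+1 < 2^(Suc (Suc i))" using i by simp_all
  then have "thue_morse a (2*i) = TT a (Suc (Suc i)) ! (2*i)" "thue_morse a (2*i+1) = TT a (Suc (Suc i)) ! (2*i+1)"
    using tm_eq by blast+
  moreover have "TT a (Suc (Suc i)) ! (2*i) = TT a (Suc i) ! i" "TT a (Suc (Suc i)) ! (2*i+1) = (\<not> TT a (Suc i) ! i)"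
    unfolding TT_Suc[of a "Suc i"] using mu_nth[OF li] by blast+
  moreover have "thue_morse a i = TT a (Suc i) ! i" using tm_eq i by blast
  ultimately show ?thesis by simp
qed

lemma tm_fixed: "fixed_point mu (thue_morse a)"
proof (rule place_fixed)
  let ?t = "thue_morse a"
  have P: "Phi mu ?t k = 2*k" for k by (induction k) (auto simp: Phi_Suc mu_def)
  show "place mu ?t ?t" unfolding place_def
  proof (intro allI impI)
    fix k j assume "j < length (mu (?t k))"
    then have "j = 0 \<or> j = 1" by (simp add: mu_def) arith
    then show "?t (Phi mu ?t k + j) = mu (?t k) ! j" using tm_even[of a k] P by (auto simp: mu_def)
  qed
  show "\<forall>x. 1 \<le> length (mu x)" by (simp add: mu_def)
qed

lemma mu_not_id: "mu \<noteq> id_morph"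
proof
  assume "mu = id_morph"
  then have "mu True = id_morph True" by simp
  then show False by (simp add: mu_def id_morph_def)
qed

lemma fp_tm:
  "\<forall>w. power_free (7/3) w \<and> (\<exists>h. h \<noteq> id_morph \<and> fixed_point h w) \<longrightarrow> w i = thue_morse (w 0) i"
proof (induction i rule: less_induct)
  case (less i)
  show ?case
  proof (intro allI impI)
    fix w assume A: "power_free (7/3) w \<and> (\<exists>h. h \<noteq> id_morph \<and> fixed_point h w)"
    show "w i = thue_morse (w 0) i"
    proof (cases "i = 0")
      case True then show ?thesis by (simp add: tm_0)
    next
      case False
      obtain h where h: "h \<noteq> id_morph" "fixed_point h w" using A by blast
      obtain y where y: "\<forall>i. w (2*i) = y i \<and> w (2*i+1) = (\<not> y i)" "power_free (7/3) y"
        "\<exists>K. K \<noteq> id_morph \<and> fixed_point K y"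
        using main_step[OF _ h] A by blast
      have y0: "y 0 = w 0" using y(1) by (metis mult_0_right)
      have lt: "i div 2 < i" using False by simp
      have IH: "y (i div 2) = thue_morse (y 0) (i div 2)" using less.IH[OF lt] y(2,3) by blast
      have "i = 2*(i div 2) \<or> i = 2*(i div 2) + 1" by arith
      then show ?thesis
      proof
        assume e: "i = 2*(i div 2)"
        then have "w i = y (i div 2)" using y(1) by metis
        moreover have "thue_morse (w 0) i = thue_morse (w 0) (i div 2)" using tm_even e by metis
        ultimately show ?thesis using IH y0 by simp
      next
        assume e: "i = 2*(i div 2) + 1"
        then have "w i = (\<not> y (i div 2))" using y(1) by metis
        moreover have "thue_morse (w 0) i = (\<not> thue_morse (w 0) (i div 2))" using tm_even e by metis
        ultimately show ?thesis using IH y0 by simp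
      qed
    qed
  qed
qed

theorem corollary11:
  fixes w :: "nat \<Rightarrow> bool"
  assumes "power_free (7/3) w"
  shows "(\<exists>h. h \<noteq> id_morph \<and> fixed_point h w) \<longleftrightarrow> (w = thue_morse False \<or> w = thue_morse True)"
proof
  assume "\<exists>h. h \<noteq> id_morph \<and> fixed_point h w"
  then have "\<forall>i. w i = thue_morse (w 0) i" using fp_tm assms by blast
  then have "w = thue_morse (w 0)" by blast
  then show "w = thue_morse False \<or> w = thue_morse True" by (cases "w 0") auto
next
  assume "w = thue_morse False \<or> w = thue_morse True"
  then show "\<exists>h. h \<noteq> id_morph \<and> fixed_point h w" using tm_fixed mu_not_id by blast
qed


end
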